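(* Let $H=\sum_{(i,j)\in E}h_{i,j}$ be a $2$-local Hamiltonian on $n$ qubits, where each $h_{i,j}$ is Hermitian and acts nontrivially only on qubits $i,j$, and for each pair $\{i,j\}$ there is at most one term $h_{i,j}$. For each $i\in[n]$ let $\eta_i>0$, $\kappa_i\ge 0$ be parameters, and let $\mathcal P_i$ be either the identity superoperator on qubit $i$ or the pinching superoperator $\mathcal P_{R_i}$ of some Hermitian one-qubit operator $R_i$ acting on qubit $i$. Suppose that for each $i$ such that $\mathcal P_i$ is not the identity, $\Delta(R_i)\ge\eta_i$ and for all $j$ with $(i,j)\in E$, $\|[R_i\otimes I_j,h_{i,j}]\|\le\kappa_i$. Define $h'_{i,j}=(\mathcal P_i\otimes\mathcal P_j\otimes \mathrm{id}_{[n]\setminus\{i,j\}})(h_{i,j})$ and $H'=\sum_{(i,j)\in E}h'_{i,j}$. Then: 1. For every $i$ such that $\mathcal P_i$ is not the identity, all the terms $h'_{i,j}$ acting on qubit $i$ commute with each other and with $R_i$. 2. For all $(i,j)\in E$, $\|h'_{i,j}-h_{i,j}\|\le 4\left(\frac{\kappa_i}{\eta_i}+\frac{\kappa_j}{\eta_j}\right)$.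
   Context: For a Hermitian $A\in\mathbb C^{2\times 2}$ with spectral decomposition $A=\lambda_{\min}(A)\Pi+\lambda_{\max}(A)(I-\Pi)$, the spectral gap is $\Delta(A)=\lambda_{\max}(A)-\lambda_{\min}(A)$, and the pinching superoperator is $\mathcal P_A(X)=\Pi X\Pi+(I-\Pi)X(I-\Pi)$ for $X\in\mathbb C^{2\times2}$ (applied on the corresponding qubit tensor factor). $\|\cdot\|$ is the operator norm and $[A,B]=AB-BA$. *)

theory Defs
  imports "HOL-Analysis.Analysis"
begin

text \<open>Qubits are the elements of a finite type 'q (so n = CARD('q)).
  The computational basis of n qubits is indexed by subsets x of the qubits
  (qubit i is in state 1 iff i in x). One-qubit operators are complex matrices
  indexed by bool (False = 0, True = 1); two-qubit operators are indexed by bool * bool.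
  n-qubit operators are complex matrices indexed by 'q set.\<close>

type_synonym qop1 = "complex^bool^bool"
type_synonym qop2 = "complex^(bool\<times>bool)^(bool\<times>bool)"
type_synonym 'q qopn = "complex^('q set)^('q set)"

text \<open>A one-qubit operator A acting on qubit i (tensored with identity elsewhere).\<close>
definition emb1 :: "'q::finite \<Rightarrow> qop1 \<Rightarrow> 'q qopn" where
  "emb1 i A = (\<chi> x y. if x - {i} = y - {i} then A $ (i \<in> x) $ (i \<in> y) else 0)"

text \<open>A two-qubit operator g acting on qubits i, j (tensored with identity elsewhere).\<close>
definition emb2 :: "'q::finite \<Rightarrow> 'q \<Rightarrow> qop2 \<Rightarrow> 'q qopn" where
  "emb2 i j g = (\<chi> x y. if x - {i, j} = y - {i, j}
                         then g $ (i \<in> x, j \<in> x) $ (i \<in> y, j \<in> y) else 0)"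

definition hermitian :: "complex^'n^'n \<Rightarrow> bool" where
  "hermitian A \<longleftrightarrow> (\<forall>i j. A $ i $ j = cnj (A $ j $ i))"

definition commutator :: "complex^'n^'n \<Rightarrow> complex^'n^'n \<Rightarrow> complex^'n^'n" where
  "commutator A B = A ** B - B ** A"

definition opnorm :: "complex^'n^'n \<Rightarrow> real" where
  "opnorm A = onorm (\<lambda>v. A *v v)"

definition eigvals :: "complex^'n^'n \<Rightarrow> complex set" where
  "eigvals A = {c. \<exists>v. v \<noteq> 0 \<and> A *v v = c *s v}"

definition lambda_min :: "complex^'n^'n \<Rightarrow> real" where
  "lambda_min A = Min (Re ` eigvals A)"

definition lambda_max :: "complex^'n^'n \<Rightarrow> real" where
  "lambda_max A = Max (Re ` eigvals A)"

definition spectral_gap :: "complex^'n^'n \<Rightarrow> real" where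
  "spectral_gap A = lambda_max A - lambda_min A"

definition spec_proj :: "qop1 \<Rightarrow> qop1" where
  "spec_proj A = (THE P. P ** P = P \<and> hermitian P \<and>
      A = lambda_min A *\<^sub>R P + lambda_max A *\<^sub>R (mat 1 - P))"

definition pinch_at :: "'q::finite \<Rightarrow> qop1 \<Rightarrow> 'q qopn \<Rightarrow> 'q qopn" where
  "pinch_at i A X = (let P = emb1 i (spec_proj A) in
      P ** X ** P + (mat 1 - P) ** X ** (mat 1 - P))"

definition superop_at :: "('q::finite \<Rightarrow> bool) \<Rightarrow> ('q \<Rightarrow> qop1) \<Rightarrow> 'q \<Rightarrow> 'q qopn \<Rightarrow> 'q qopn" where
  "superop_at pin R i X = (if pin i then pinch_at i (R i) X else X)"

end

theory Submission
  imports Defs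
begin

lemma mv2: "(M *v v) $ p = M$p$False * v$False + M$p$True * v$True" for M :: qop1
  by (simp add: matrix_vector_mult_def UNIV_bool)

lemma mm2: "(M ** N) $ p $ q = M$p$False * N$False$q + M$p$True * N$True$q" for M N :: qop1
  by (simp add: matrix_matrix_mult_def UNIV_bool)

lemma vec2_eq: "(v = w) \<longleftrightarrow> v$False = w$False \<and> v$True = w$True" for v w :: "complex^bool"
  by (auto simp: vec_eq_iff all_bool_eq)

lemma mat2_eq: "(M = N) \<longleftrightarrow> M$False$False = N$False$False \<and> M$False$True = N$False$True
   \<and> M$True$False = N$True$False \<and> M$True$True = N$True$True" for M N :: qop1
  by (auto simp: vec_eq_iff all_bool_eq)

lemma eig_char:
  fixes M :: qop1
  shows "c \<in> eigvals M \<longleftrightarrow>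
     (M$False$False - c) * (M$True$True - c) - M$False$True * M$True$False = 0"
proof -
  define a where "a = M$False$False"
  define b where "b = M$False$True"
  define b' where "b' = M$True$False"
  define d where "d = M$True$True"
  have ev: "M *v v = c *s v \<longleftrightarrow> (a - c) * v$False + b * v$True = 0 \<and> b' * v$False + (d - c) * v$True = 0" for v
    by (simp add: vec2_eq mv2 a_def b_def b'_def d_def algebra_simps)
  show ?thesis
  proof
    assume "c \<in> eigvals M"
    then obtain v where v: "v \<noteq> 0" "M *v v = c *s v" by (auto simp: eigvals_def)
    then have e1: "(a - c) * v$False + b * v$True = 0" and e2: "b' * v$False + (d - c) * v$True = 0"
      using ev by auto
    have "((a - c) * (d - c) - b * b') * v$False = (d - c) * ((a - c) * v$False + b * v$True) - b * (b' * v$False + (d - c) * v$True)"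
      by (simp add: algebra_simps)
    then have "((a - c) * (d - c) - b * b') * v$False = 0" using e1 e2 by simp
    moreover have "((a - c) * (d - c) - b * b') * v$True = (a - c) * (b' * v$False + (d - c) * v$True) - b' * ((a - c) * v$False + b * v$True)"
      by (simp add: algebra_simps)
    then have "((a - c) * (d - c) - b * b') * v$True = 0" using e1 e2 by simp
    moreover have "v$False \<noteq> 0 \<or> v$True \<noteq> 0" using v(1) by (auto simp: vec2_eq)
    ultimately show "(M$False$False - c) * (M$True$True - c) - M$False$True * M$True$False = 0"
      by (auto simp: a_def b_def b'_def d_def)
  next
    assume h: "(M$False$False - c) * (M$True$True - c) - M$False$True * M$True$False = 0"
    then have h: "(a - c) * (d - c) = b * b'" by (simp add: a_def b_def b'_def d_def)
    show "c \<in> eigvals M"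
    proof (cases "b \<noteq> 0 \<or> a \<noteq> c")
      case True
      define v :: "complex^bool" where "v = (\<chi> p. if p then c - a else b)"
      have "v \<noteq> 0" using True by (auto simp: v_def vec2_eq)
      moreover have "M *v v = c *s v" unfolding ev using h
        by (simp add: v_def algebra_simps)
      ultimately show ?thesis by (auto simp: eigvals_def)
    next
      case False
      then have "b = 0" "a = c" by auto
      show ?thesis
      proof (cases "b' \<noteq> 0 \<or> d \<noteq> c")
        case True
        define v :: "complex^bool" where "v = (\<chi> p. if p then - b' else d - c)"
        have "v \<noteq> 0" using True by (auto simp: v_def vec2_eq)
        moreover have "M *v v = c *s v" unfolding ev using h
          by (simp add: v_def algebra_simps)
        ultimately show ?thesis by (auto simp: eigvals_def)
      next
        case False
        define v :: "complex^bool" where "v = (\<chi> p. if p then 0 else 1)"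
        have "v \<noteq> 0" by (auto simp: v_def vec2_eq)
        moreover have "M *v v = c *s v" unfolding ev using \<open>b = 0\<close> \<open>a = c\<close> False
          by (simp add: v_def)
        ultimately show ?thesis by (auto simp: eigvals_def)
      qed
    qed
  qed
qed

lemma real_of_cnj: "z = cnj z \<Longrightarrow> z = of_real (Re z)"
  by (simp add: complex_eq_iff)

lemma herm2:
  fixes M :: qop1
  assumes "hermitian M"
  shows "M$False$False = of_real (Re (M$False$False))" "M$True$True = of_real (Re (M$True$True))"
    "M$True$False = cnj (M$False$True)"
proof -
  have h: "\<And>i j. M$i$j = cnj (M$j$i)" using assms unfolding hermitian_def by blast
  show "M$False$False = of_real (Re (M$False$False))"
    by (rule real_of_cnj, rule h)
  show "M$True$True = of_real (Re (M$True$True))"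
    by (rule real_of_cnj, rule h)
  show "M$True$False = cnj (M$False$True)" by (rule h)
qed

definition lm2 :: "qop1 \<Rightarrow> real" where
  "lm2 M = (Re (M$False$False) + Re (M$True$True))/2
     - sqrt (((Re (M$False$False) - Re (M$True$True))/2)^2 + (cmod (M$False$True))^2)"
definition lp2 :: "qop1 \<Rightarrow> real" where
  "lp2 M = (Re (M$False$False) + Re (M$True$True))/2
     + sqrt (((Re (M$False$False) - Re (M$True$True))/2)^2 + (cmod (M$False$True))^2)"

lemma eigvals_herm2:
  fixes M :: qop1
  assumes "hermitian M"
  shows "eigvals M = {of_real (lm2 M), of_real (lp2 M)}"
proof -
  define x where "x = Re (M$False$False)"
  define y where "y = Re (M$True$True)"
  define q where "q = (cmod (M$False$True))^2"
  define m where "m = (x + y)/2"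
  define s where "s = sqrt (((x - y)/2)^2 + q)"
  have s2: "s^2 = ((x - y)/2)^2 + q" unfolding s_def q_def by simp
  have lm: "lm2 M = m - s" and lp: "lp2 M = m + s"
    by (simp_all add: lm2_def lp2_def m_def s_def x_def y_def q_def)
  have rl1: "(m - s) + (m + s) = x + y" by (simp add: m_def)
  have rl2: "(m - s) * (m + s) = x * y - q"
  proof -
    have "(m - s) * (m + s) = m^2 - s^2" by (simp add: power2_eq_square algebra_simps)
    also have "\<dots> = m^2 - ((x - y)/2)^2 - q" using s2 by simp
    also have "\<dots> = x * y - q" by (simp add: m_def power2_eq_square field_simps)
    finally show ?thesis .
  qed
  have bb: "M$False$True * M$True$False = of_real q"
    using herm2(3)[OF assms] complex_norm_square[of "M$False$True"] by (simp add: q_def)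
  have ch: "(M$False$False - c) * (M$True$True - c) - M$False$True * M$True$False
        = (c - of_real (m - s)) * (c - of_real (m + s))" for c
  proof -
    have "(M$False$False - c) * (M$True$True - c) - M$False$True * M$True$False
         = c * c - of_real (x + y) * c + of_real (x * y - q)"
    proof -
      have "M$False$False = of_real x" "M$True$True = of_real y"
        unfolding x_def y_def by (rule herm2(1)[OF assms], rule herm2(2)[OF assms])
      then show ?thesis using bb by (simp add: algebra_simps)
    qed
    also have "\<dots> = c * c - of_real ((m - s) + (m + s)) * c + of_real ((m - s) * (m + s))"
      using rl1 rl2 by simp
    also have "\<dots> = (c - of_real (m - s)) * (c - of_real (m + s))"
      by (simp add: algebra_simps)
    finally show ?thesis .
  qed
  show ?thesis
    unfolding set_eq_iff eig_char ch lm lp by auto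
qed

lemma lm_le_lp: "lm2 M \<le> lp2 M"
  by (simp add: lm2_def lp2_def)

lemma lambda_herm2:
  fixes M :: qop1
  assumes "hermitian M"
  shows "lambda_min M = lm2 M" "lambda_max M = lp2 M"
  using lm_le_lp[of M]
  by (simp_all add: lambda_min_def lambda_max_def eigvals_herm2[OF assms] min_def max_def)

definition Pi0 :: "qop1 \<Rightarrow> qop1" where
  "Pi0 M = (\<chi> i j. ((if i = j then of_real (lp2 M) else 0) - M$i$j) / of_real (lp2 M - lm2 M))"

lemma lmlp_rel:
  "lm2 M + lp2 M = Re (M$False$False) + Re (M$True$True)"
  "lm2 M * lp2 M = Re (M$False$False) * Re (M$True$True) - (cmod (M$False$True))^2"
proof -
  define x where "x = Re (M$False$False)"
  define y where "y = Re (M$True$True)"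
  define q where "q = (cmod (M$False$True))^2"
  define m where "m = (x + y)/2"
  define s where "s = sqrt (((x - y)/2)^2 + q)"
  have s2: "s^2 = ((x - y)/2)^2 + q" unfolding s_def q_def by simp
  have lm: "lm2 M = m - s" and lp: "lp2 M = m + s"
    by (simp_all add: lm2_def lp2_def m_def s_def x_def y_def q_def)
  show "lm2 M + lp2 M = Re (M$False$False) + Re (M$True$True)"
    by (simp add: lm lp m_def x_def y_def)
  have "(m - s) * (m + s) = m^2 - s^2" by (simp add: power2_eq_square algebra_simps)
  also have "\<dots> = m^2 - ((x - y)/2)^2 - q" using s2 by simp
  also have "\<dots> = x * y - q" by (simp add: m_def power2_eq_square field_simps)
  finally show "lm2 M * lp2 M = Re (M$False$False) * Re (M$True$True) - (cmod (M$False$True))^2"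
    by (simp add: lm lp x_def y_def q_def)
qed

lemma herm_rel:
  fixes M :: qop1
  assumes "hermitian M"
  shows "M$False$False + M$True$True = of_real (lm2 M) + of_real (lp2 M)"
    "(of_real (lp2 M) - M$False$False) * (of_real (lm2 M) - M$False$False) = - (M$False$True * M$True$False)"
    "(of_real (lp2 M) - M$True$True) * (of_real (lm2 M) - M$True$True) = - (M$False$True * M$True$False)"
proof -
  define x where "x = Re (M$False$False)"
  define y where "y = Re (M$True$True)"
  define q where "q = (cmod (M$False$True))^2"
  have a: "M$False$False = of_real x" and d: "M$True$True = of_real y"
    unfolding x_def y_def by (rule herm2(1)[OF assms], rule herm2(2)[OF assms])
  have bb: "M$False$True * M$True$False = of_real q"
    using herm2(3)[OF assms] complex_norm_square[of "M$False$True"] by (simp add: q_def)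
  have r1: "of_real (lm2 M) + of_real (lp2 M) = (of_real (x + y) :: complex)"
    using arg_cong[OF lmlp_rel(1)[of M], of "of_real :: real \<Rightarrow> complex"] by (simp add: x_def y_def)
  have r2: "of_real (lm2 M) * of_real (lp2 M) = (of_real (x * y - q) :: complex)"
    using arg_cong[OF lmlp_rel(2)[of M], of "of_real :: real \<Rightarrow> complex"] by (simp add: x_def y_def q_def)
  show "M$False$False + M$True$True = of_real (lm2 M) + of_real (lp2 M)"
    using r1 a d by simp
  have "(of_real (lp2 M) - M$False$False) * (of_real (lm2 M) - M$False$False)
     = of_real (lm2 M) * of_real (lp2 M) - (of_real (lm2 M) + of_real (lp2 M)) * of_real x + of_real x * of_real x"
    unfolding a by (simp add: algebra_simps)
  also have "\<dots> = - (M$False$True * M$True$False)"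
    unfolding r1 r2 bb by (simp add: algebra_simps)
  finally show "(of_real (lp2 M) - M$False$False) * (of_real (lm2 M) - M$False$False) = - (M$False$True * M$True$False)" .
  have "(of_real (lp2 M) - M$True$True) * (of_real (lm2 M) - M$True$True)
     = of_real (lm2 M) * of_real (lp2 M) - (of_real (lm2 M) + of_real (lp2 M)) * of_real y + of_real y * of_real y"
    unfolding d by (simp add: algebra_simps)
  also have "\<dots> = - (M$False$True * M$True$False)"
    unfolding r1 r2 bb by (simp add: algebra_simps)
  finally show "(of_real (lp2 M) - M$True$True) * (of_real (lm2 M) - M$True$True) = - (M$False$True * M$True$False)" .
qed

lemma frac_sq: "(G::complex) \<noteq> 0 \<Longrightarrow> x * y + z * w = G * v \<Longrightarrow> x / G * (y / G) + z / G * (w / G) = v / G"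
proof -
  assume G: "G \<noteq> 0" and e: "x * y + z * w = G * v"
  have "x / G * (y / G) + z / G * (w / G) = (x * y) / (G * G) + (z * w) / (G * G)" by simp
  also have "\<dots> = (x * y + z * w) / (G * G)" by (simp add: add_divide_distrib)
  also have "\<dots> = v / G" using G unfolding e by simp
  finally show ?thesis .
qed

lemma lin_aux: "(P::complex) - L \<noteq> 0 \<Longrightarrow> L * (v / (P - L)) + P * (c - v / (P - L)) = P * c - v"
proof -
  assume G: "P - L \<noteq> 0"
  have w: "L * w + P * (c - w) = P * c - (P - L) * w" for w :: complex
    by (simp add: algebra_simps)
  have "L * (v / (P - L)) + P * (c - v / (P - L)) = P * c - (P - L) * (v / (P - L))"
    by (rule w)
  also have "\<dots> = P * c - v" using G by simp
  finally show ?thesis .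
qed

lemma comp_scaleR: "(r *\<^sub>R X) $ i $ j = of_real r * (X $ i $ j)" for X :: qop1
  unfolding vector_scaleR_component by (simp add: scaleR_conv_of_real)

lemma Pi0_entries:
  "Pi0 M $ False $ False = (of_real (lp2 M) - M$False$False) / of_real (lp2 M - lm2 M)"
  "Pi0 M $ False $ True = - M$False$True / of_real (lp2 M - lm2 M)"
  "Pi0 M $ True $ False = - M$True$False / of_real (lp2 M - lm2 M)"
  "Pi0 M $ True $ True = (of_real (lp2 M) - M$True$True) / of_real (lp2 M - lm2 M)"
  by (simp_all add: Pi0_def)

lemma Pi0_props:
  fixes M :: qop1
  assumes h: "hermitian M" and g: "lm2 M < lp2 M"
  shows "Pi0 M ** Pi0 M = Pi0 M" "hermitian (Pi0 M)"
    "M = lm2 M *\<^sub>R Pi0 M + lp2 M *\<^sub>R (mat 1 - Pi0 M)"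
    "Pi0 M $ False $ False + Pi0 M $ True $ True = 1"
proof -
  define L :: complex where "L = of_real (lm2 M)"
  define P :: complex where "P = of_real (lp2 M)"
  define a where "a = M$False$False"
  define b where "b = M$False$True"
  define b' where "b' = M$True$False"
  define d where "d = M$True$True"
  have G: "of_real (lp2 M - lm2 M) = P - L" by (simp add: P_def L_def)
  have G0: "P - L \<noteq> 0" using g by (simp add: P_def L_def)
  have e1: "a + d = L + P" and e2: "(P - a) * (L - a) = - (b * b')"
    and e3: "(P - d) * (L - d) = - (b * b')"
    using herm_rel[OF h] by (simp_all add: L_def P_def a_def b_def b'_def d_def)
  have E: "Pi0 M $ False $ False = (P - a) / (P - L)" "Pi0 M $ False $ True = - b / (P - L)"
     "Pi0 M $ True $ False = - b' / (P - L)" "Pi0 M $ True $ True = (P - d) / (P - L)"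
    unfolding Pi0_entries G by (simp_all add: P_def a_def b_def b'_def d_def)
  show "Pi0 M $ False $ False + Pi0 M $ True $ True = 1"
  proof -
    have "(P - a) + (P - d) = P - L" using e1 by (simp add: algebra_simps)
    then show ?thesis unfolding E using G0 by (simp add: add_divide_distrib[symmetric])
  qed
  have q1: "(P - a) * (P - a) + b * b' = (P - L) * (P - a)"
    using e2 by (simp add: algebra_simps)
  have q2: "(P - a) * b + b * (P - d) = (P - L) * b"
  proof -
    have "(P - a) * b + b * (P - d) = b * (2*P - (a + d))" by (simp add: algebra_simps)
    also have "\<dots> = (P - L) * b" unfolding e1 by (simp add: algebra_simps)
    finally show ?thesis .
  qed
  have q3: "b' * (P - a) + (P - d) * b' = (P - L) * b'"
  proof -
    have "b' * (P - a) + (P - d) * b' = b' * (2*P - (a + d))" by (simp add: algebra_simps)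
    also have "\<dots> = (P - L) * b'" unfolding e1 by (simp add: algebra_simps)
    finally show ?thesis .
  qed
  have q4: "b' * b + (P - d) * (P - d) = (P - L) * (P - d)"
    using e3 by (simp add: algebra_simps)
  show "Pi0 M ** Pi0 M = Pi0 M"
    unfolding mat2_eq mm2 E
  proof (intro conjI)
    show "(P - a) / (P - L) * ((P - a) / (P - L)) + - b / (P - L) * (- b' / (P - L)) = (P - a) / (P - L)"
      by (rule frac_sq[OF G0]) (use q1 in simp)
    show "(P - a) / (P - L) * (- b / (P - L)) + - b / (P - L) * ((P - d) / (P - L)) = - b / (P - L)"
      by (rule frac_sq[OF G0]) (use q2 in \<open>simp add: algebra_simps\<close>)
    show "- b' / (P - L) * ((P - a) / (P - L)) + (P - d) / (P - L) * (- b' / (P - L)) = - b' / (P - L)"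
      by (rule frac_sq[OF G0]) (use q3 in \<open>simp add: algebra_simps\<close>)
    show "- b' / (P - L) * (- b / (P - L)) + (P - d) / (P - L) * ((P - d) / (P - L)) = (P - d) / (P - L)"
      by (rule frac_sq[OF G0]) (use q4 in simp)
  qed
  show "hermitian (Pi0 M)"
  proof -
    have cL: "cnj L = L" and cP: "cnj P = P" by (simp_all add: L_def P_def)
    have ca: "cnj a = a" unfolding a_def by (metis herm2(1)[OF h] complex_cnj_complex_of_real)
    have cd: "cnj d = d" unfolding d_def by (metis herm2(2)[OF h] complex_cnj_complex_of_real)
    have cb: "b' = cnj b" unfolding b_def b'_def by (rule herm2(3)[OF h])
    show ?thesis unfolding hermitian_def all_bool_eq E cb
      by (simp add: cL cP ca cd)
  qed
  show "M = lm2 M *\<^sub>R Pi0 M + lp2 M *\<^sub>R (mat 1 - Pi0 M)"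
  proof -
    have m: "(mat 1 :: qop1) $ i $ j = (if i = j then 1 else 0)" for i j by (simp add: mat_def)
    have X: "(lm2 M *\<^sub>R Pi0 M + lp2 M *\<^sub>R (mat 1 - Pi0 M)) $ i $ j
       = L * Pi0 M $ i $ j + P * ((if i = j then 1 else 0) - Pi0 M $ i $ j)" for i j
      unfolding vector_add_component comp_scaleR vector_minus_component m by (simp add: L_def P_def)
    show ?thesis unfolding mat2_eq X E
      using lin_aux[OF G0, of "P - a" 1] lin_aux[OF G0, of "- b" 0]
        lin_aux[OF G0, of "- b'" 0] lin_aux[OF G0, of "P - d" 1]
      by (simp add: a_def b_def b'_def d_def)
  qed
qed

lemma lin_uniq: "(L::complex) \<noteq> P \<Longrightarrow> L * x + P * (c - x) = L * y + P * (c - y) \<Longrightarrow> x = y"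
proof -
  assume n: "L \<noteq> P" and e: "L * x + P * (c - x) = L * y + P * (c - y)"
  have w: "L * w + P * (c - w) = P * c + (L - P) * w" for w :: complex
    by (simp add: algebra_simps)
  from e have "(L - P) * x = (L - P) * y" unfolding w by simp
  then show "x = y" using n by simp
qed

lemma spec_proj_Pi0:
  fixes M :: qop1
  assumes h: "hermitian M" and g: "lm2 M < lp2 M"
  shows "spec_proj M = Pi0 M"
  unfolding spec_proj_def lambda_herm2[OF h]
proof (rule the_equality)
  show "Pi0 M ** Pi0 M = Pi0 M \<and> hermitian (Pi0 M) \<and>
        M = lm2 M *\<^sub>R Pi0 M + lp2 M *\<^sub>R (mat 1 - Pi0 M)"
    using Pi0_props[OF h g] by blast
  fix Q :: qop1
  assume "Q ** Q = Q \<and> hermitian Q \<and> M = lm2 M *\<^sub>R Q + lp2 M *\<^sub>R (mat 1 - Q)"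
  then have e: "lm2 M *\<^sub>R Q + lp2 M *\<^sub>R (mat 1 - Q) = lm2 M *\<^sub>R Pi0 M + lp2 M *\<^sub>R (mat 1 - Pi0 M)"
    using Pi0_props(3)[OF h g] by simp
  have m: "(mat 1 :: qop1) $ i $ j = (if i = j then 1 else 0)" for i j by (simp add: mat_def)
  have X: "(lm2 M *\<^sub>R A + lp2 M *\<^sub>R (mat 1 - A)) $ i $ j
       = of_real (lm2 M) * A $ i $ j + of_real (lp2 M) * ((if i = j then 1 else 0) - A $ i $ j)" for i j and A :: qop1
    unfolding vector_add_component comp_scaleR vector_minus_component m by simp
  have n: "(of_real (lm2 M) :: complex) \<noteq> of_real (lp2 M)" using g by simp
  show "Q = Pi0 M"
    unfolding vec_eq_iff
  proof (intro allI)
    fix i j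
    have "(lm2 M *\<^sub>R Q + lp2 M *\<^sub>R (mat 1 - Q)) $ i $ j = (lm2 M *\<^sub>R Pi0 M + lp2 M *\<^sub>R (mat 1 - Pi0 M)) $ i $ j"
      using e by simp
    then show "Q $ i $ j = Pi0 M $ i $ j" unfolding X by (rule lin_uniq[OF n])
  qed
qed

lemma rank1_minor:
  fixes P :: qop1
  assumes "P ** P = P" "P $ False $ False + P $ True $ True = 1"
  shows "P $ p $ b * P $ c $ q = P $ c $ b * P $ p $ q"
proof -
  have e: "P$False$False * P$False$False + P$False$True * P$True$False = P$False$False"
    using assms(1) unfolding mat2_eq mm2 by blast
  have t: "P$True$True = 1 - P$False$False" using assms(2) by (simp add: algebra_simps)
  have det: "P$False$False * P$True$True = P$False$True * P$True$False"
    using e unfolding t by (simp add: algebra_simps)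
  show ?thesis
    using det by (cases p; cases b; cases c; cases q) (simp_all add: mult.commute)
qed

lemma mm_sub_l: "A ** (B - C) = A ** B - A ** C" for A B C :: "complex^'n^'n"
  by (simp add: matrix_matrix_mult_def vec_eq_iff sum_subtractf right_diff_distrib)
lemma mm_sub_r: "(A - B) ** C = A ** C - B ** C" for A B C :: "complex^'n^'n"
  by (simp add: matrix_matrix_mult_def vec_eq_iff sum_subtractf left_diff_distrib)
lemma mm_add_r: "(A + B) ** C = A ** C + B ** C" for A B C :: "complex^'n^'n"
  by (simp add: matrix_matrix_mult_def vec_eq_iff sum.distrib distrib_right)
lemma mm_add_l: "A ** (B + C) = A ** B + A ** C" for A B C :: "complex^'n^'n"
  by (rule matrix_add_ldistrib)
lemma mm_scale_l: "(r *\<^sub>R A) ** B = r *\<^sub>R (A ** B)" for A B :: "complex^'n^'n"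
  by (simp add: scalar_matrix_assoc)
lemma mm_scale_r: "A ** (r *\<^sub>R B) = r *\<^sub>R (A ** B)" for A B :: "complex^'n^'n"
  by (simp add: matrix_scalar_ac scalar_matrix_assoc)
lemmas mm_distribs = mm_sub_l mm_sub_r mm_add_r mm_add_l mm_scale_l mm_scale_r

lemma compl_proj:
  fixes P :: qop1
  assumes "P ** P = P" "P $ False $ False + P $ True $ True = 1"
  shows "(mat 1 - P) ** (mat 1 - P) = mat 1 - P"
    "(mat 1 - P) $ False $ False + (mat 1 - P) $ True $ True = 1"
    "P ** (mat 1 - P) = 0" "(mat 1 - P) ** P = 0"
proof -
  have d: "A ** (mat 1 - B) = A - A ** B" "(mat 1 - B) ** A = A - B ** A" for A B :: qop1
    by (simp_all add: mm_sub_l mm_sub_r)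
  show "(mat 1 - P) ** (mat 1 - P) = mat 1 - P" unfolding d using assms(1) by simp
  show "(mat 1 - P) $ False $ False + (mat 1 - P) $ True $ True = 1" using assms(2)
    by (simp add: mat_def algebra_simps)
  show "P ** (mat 1 - P) = 0" "(mat 1 - P) ** P = 0" unfolding d using assms(1) by simp_all
qed

lemma minus_i_eq: "y - {i} = x - {i} \<longleftrightarrow> y = insert i x \<or> y = x - {i}"
  by auto

lemma emb1_ml:
  fixes X :: "'q::finite qopn"
  shows "(emb1 i A ** X) $ x $ z = A$(i\<in>x)$True * X$(insert i x)$z + A$(i\<in>x)$False * X$(x - {i})$z"
proof -
  let ?g = "\<lambda>y. (if x - {i} = y - {i} then A$(i\<in>x)$(i\<in>y) else 0) * X$y$z"
  have "(emb1 i A ** X) $ x $ z = sum ?g UNIV"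
    by (simp add: matrix_matrix_mult_def emb1_def)
  also have "\<dots> = sum ?g {insert i x, x - {i}}"
    by (rule sum.mono_neutral_right) (auto simp: minus_i_eq)
  also have "\<dots> = ?g (insert i x) + ?g (x - {i})"
    by (subst sum.insert) auto
  also have "\<dots> = A$(i\<in>x)$True * X$(insert i x)$z + A$(i\<in>x)$False * X$(x - {i})$z"
    by simp
  finally show ?thesis .
qed

lemma emb1_mr:
  fixes X :: "'q::finite qopn"
  shows "(X ** emb1 i A) $ x $ z = X$x$(insert i z) * A$True$(i\<in>z) + X$x$(z - {i}) * A$False$(i\<in>z)"
proof -
  let ?g = "\<lambda>y. X$x$y * (if y - {i} = z - {i} then A$(i\<in>y)$(i\<in>z) else 0)"
  have "(X ** emb1 i A) $ x $ z = sum ?g UNIV"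
    by (simp add: matrix_matrix_mult_def emb1_def)
  also have "\<dots> = sum ?g {insert i z, z - {i}}"
    by (rule sum.mono_neutral_right) (auto simp: minus_i_eq)
  also have "\<dots> = ?g (insert i z) + ?g (z - {i})"
    by (subst sum.insert) auto
  also have "\<dots> = X$x$(insert i z) * A$True$(i\<in>z) + X$x$(z - {i}) * A$False$(i\<in>z)"
    by simp
  finally show ?thesis .
qed

lemma emb1_entry: "emb1 i A $ x $ y = (if x - {i} = y - {i} then A $ (i \<in> x) $ (i \<in> y) else 0)"
  by (simp add: emb1_def)

lemma emb1_mult: "emb1 i A ** emb1 i B = emb1 i (A ** B)"
  for A B :: qop1 and i :: "'q::finite"
  unfolding vec_eq_iff
proof (intro allI)
  fix x z :: "'q set"
  show "(emb1 i A ** emb1 i B) $ x $ z = emb1 i (A ** B) $ x $ z"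
    unfolding emb1_ml emb1_entry mm2
    by (cases "i \<in> x"; cases "i \<in> z") (auto simp: insert_absorb)
qed

lemma emb1_one: "emb1 i (mat 1) = (mat 1 :: 'q::finite qopn)"
  unfolding vec_eq_iff emb1_entry by (auto simp: mat_def)

lemma emb1_sub: "emb1 i (A - B) = emb1 i A - emb1 i B"
  by (simp add: vec_eq_iff emb1_entry)
lemma emb1_add: "emb1 i (A + B) = emb1 i A + emb1 i B"
  by (simp add: vec_eq_iff emb1_entry)
lemma emb1_scale: "emb1 i (r *\<^sub>R A) = r *\<^sub>R emb1 i A"
  by (simp add: vec_eq_iff emb1_entry)
lemma emb1_herm: "hermitian A \<Longrightarrow> hermitian (emb1 i A)"
  unfolding hermitian_def
proof (intro allI)
  fix x y
  assume h: "\<forall>i j. A $ i $ j = cnj (A $ j $ i)"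
  have e: "A $ (i \<in> x) $ (i \<in> y) = cnj (A $ (i \<in> y) $ (i \<in> x))" using h by blast
  show "emb1 i A $ x $ y = cnj (emb1 i A $ y $ x)"
    unfolding emb1_entry
  proof (cases "x - {i} = y - {i}")
    case True
    then show "(if x - {i} = y - {i} then A $ (i \<in> x) $ (i \<in> y) else 0) =
      cnj (if y - {i} = x - {i} then A $ (i \<in> y) $ (i \<in> x) else 0)" using e by simp
  next
    case False
    then show "(if x - {i} = y - {i} then A $ (i \<in> x) $ (i \<in> y) else 0) =
      cnj (if y - {i} = x - {i} then A $ (i \<in> y) $ (i \<in> x) else 0)" by auto
  qed
qed

definition suppd :: "'q::finite set \<Rightarrow> 'q qopn \<Rightarrow> bool" where
  "suppd S X \<longleftrightarrow> (\<exists>f. \<forall>x y. X$x$y = (if x - S = y - S then f (x \<inter> S) (y \<inter> S) else 0))"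

lemma suppdE:
  assumes "suppd S X"
  obtains f where "\<And>x y. X$x$y = (if x - S = y - S then f (x \<inter> S) (y \<inter> S) else 0)"
  using assms unfolding suppd_def by blast

lemma suppdI:
  assumes "\<And>x y. X$x$y = (if x - S = y - S then f (x \<inter> S) (y \<inter> S) else 0)"
  shows "suppd S X"
  using assms unfolding suppd_def by blast

lemma suppd_add: "suppd S X \<Longrightarrow> suppd S Y \<Longrightarrow> suppd S (X + Y)"
proof -
  assume "suppd S X" "suppd S Y"
  then obtain f g where f: "\<And>x y. X$x$y = (if x - S = y - S then f (x \<inter> S) (y \<inter> S) else 0)"
    and g: "\<And>x y. Y$x$y = (if x - S = y - S then g (x \<inter> S) (y \<inter> S) else 0)"
    by (metis suppdE)
  show ?thesis
    by (rule suppdI[where f = "\<lambda>a c. f a c + g a c"]) (simp add: f g)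
qed

lemma suppd_emb2: "suppd {i, j} (emb2 i j g)"
  by (rule suppdI[where f = "\<lambda>a c. g $ (i \<in> a, j \<in> a) $ (i \<in> c, j \<in> c)"])
     (simp add: emb2_def)

lemma suppd_ml:
  assumes "suppd S X" "i \<in> S"
  shows "suppd S (emb1 i A ** X)"
proof -
  obtain f where f: "\<And>x y. X$x$y = (if x - S = y - S then f (x \<inter> S) (y \<inter> S) else 0)"
    using assms(1) by (metis suppdE)
  show ?thesis
  proof (rule suppdI[where f = "\<lambda>a c. A$(i\<in>a)$True * f (insert i a) c + A$(i\<in>a)$False * f (a - {i}) c"])
    fix x z :: "'a set"
    have e1: "insert i x - S = x - S" "x - {i} - S = x - S" "insert i x \<inter> S = insert i (x \<inter> S)"
      "(x - {i}) \<inter> S = x \<inter> S - {i}" using assms(2) by auto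
    show "(emb1 i A ** X) $ x $ z = (if x - S = z - S then A$(i\<in>x \<inter> S)$True * f (insert i (x \<inter> S)) (z \<inter> S)
       + A$(i\<in>x \<inter> S)$False * f (x \<inter> S - {i}) (z \<inter> S) else 0)"
      unfolding emb1_ml f e1 using assms(2) by simp
  qed
qed

lemma suppd_mr:
  assumes "suppd S X" "i \<in> S"
  shows "suppd S (X ** emb1 i A)"
proof -
  obtain f where f: "\<And>x y. X$x$y = (if x - S = y - S then f (x \<inter> S) (y \<inter> S) else 0)"
    using assms(1) by (metis suppdE)
  show ?thesis
  proof (rule suppdI[where f = "\<lambda>a c. f a (insert i c) * A$True$(i\<in>c) + f a (c - {i}) * A$False$(i\<in>c)"])
    fix x z :: "'a set"
    have e1: "insert i z - S = z - S" "z - {i} - S = z - S" "insert i z \<inter> S = insert i (z \<inter> S)"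
      "(z - {i}) \<inter> S = z \<inter> S - {i}" using assms(2) by auto
    show "(X ** emb1 i A) $ x $ z = (if x - S = z - S then f (x \<inter> S) (insert i (z \<inter> S)) * A$True$(i\<in>z \<inter> S)
       + f (x \<inter> S) (z \<inter> S - {i}) * A$False$(i\<in>z \<inter> S) else 0)"
      unfolding emb1_mr f e1 using assms(2) by simp
  qed
qed

lemma suppd_comm:
  assumes "suppd S X" "i \<notin> S"
  shows "emb1 i A ** X = X ** emb1 i A"
proof -
  obtain f where f: "\<And>x y. X$x$y = (if x - S = y - S then f (x \<inter> S) (y \<inter> S) else 0)"
    using assms(1) by (metis suppdE)
  show ?thesis unfolding vec_eq_iff
  proof (intro allI)
    fix x z :: "'a set"
    have k: "insert i x - S = z - S \<longleftrightarrow> (x - S - {i} = z - S - {i} \<and> i \<in> z)"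
      "x - {i} - S = z - S \<longleftrightarrow> (x - S - {i} = z - S - {i} \<and> i \<notin> z)"
      "x - S = insert i z - S \<longleftrightarrow> (x - S - {i} = z - S - {i} \<and> i \<in> x)"
      "x - S = z - {i} - S \<longleftrightarrow> (x - S - {i} = z - S - {i} \<and> i \<notin> x)"
      using assms(2) by blast+
    have k2: "insert i x \<inter> S = x \<inter> S" "(x - {i}) \<inter> S = x \<inter> S"
      "insert i z \<inter> S = z \<inter> S" "(z - {i}) \<inter> S = z \<inter> S"
      using assms(2) by auto
    show "(emb1 i A ** X) $ x $ z = (X ** emb1 i A) $ x $ z"
      unfolding emb1_ml emb1_mr f k k2
      by (cases "i \<in> x"; cases "i \<in> z") auto
  qed
qed

lemma suppd_emb1: "suppd {k} (emb1 k A)"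
  by (rule suppdI[where f = "\<lambda>a c. A $ (k \<in> a) $ (k \<in> c)"]) (simp add: emb1_def)

lemma suppd_single:
  assumes "suppd {k} Z"
  shows "Z = emb1 k (\<chi> p q. Z $ (if p then {k} else {}) $ (if q then {k} else {}))"
proof -
  obtain f where f: "\<And>x y. Z$x$y = (if x - {k} = y - {k} then f (x \<inter> {k}) (y \<inter> {k}) else 0)"
    using assms(1) by (metis suppdE)
  have c: "x \<inter> {k} = (if k \<in> x then {k} else {})" for x by auto
  show ?thesis unfolding vec_eq_iff emb1_entry
    by (simp add: f c)
qed

lemma rank1_sandwich:
  fixes X :: "'q::finite qopn" and P :: qop1
  assumes minor: "\<And>p b c q. P$p$b * P$c$q = P$c$b * P$p$q"
    and sX: "suppd S X" and iS: "i \<in> S"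
  shows "\<exists>Z. suppd (S - {i}) Z \<and> emb1 i P ** X ** emb1 i P = emb1 i P ** Z"
proof -
  define Z :: "'q qopn" where "Z = (\<chi> x z. if (i \<in> x) = (i \<in> z) then
      P$True$True * X$(insert i x)$(insert i z) + P$False$True * X$(insert i x)$(z - {i})
    + P$True$False * X$(x - {i})$(insert i z) + P$False$False * X$(x - {i})$(z - {i}) else 0)"
  obtain f where f: "\<And>x y. X$x$y = (if x - S = y - S then f (x \<inter> S) (y \<inter> S) else 0)"
    using sX by (metis suppdE)
  have "suppd (S - {i}) Z"
  proof (rule suppdI[where f = "\<lambda>a c. P$True$True * f (insert i a) (insert i c) + P$False$True * f (insert i a) (c - {i})
    + P$True$False * f (a - {i}) (insert i c) + P$False$False * f (a - {i}) (c - {i})"])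
    fix x z :: "'q set"
    have e: "insert i x - S = x - S" "x - {i} - S = x - S" "insert i z - S = z - S" "z - {i} - S = z - S"
      "insert i x \<inter> S = insert i (x \<inter> (S - {i}))" "(x - {i}) \<inter> S = x \<inter> (S - {i}) - {i}"
      "insert i z \<inter> S = insert i (z \<inter> (S - {i}))" "(z - {i}) \<inter> S = z \<inter> (S - {i}) - {i}"
      using iS by auto
    have c: "(x - (S - {i}) = z - (S - {i})) \<longleftrightarrow> ((i \<in> x) = (i \<in> z) \<and> x - S = z - S)"
      using iS by auto
    show "Z $ x $ z = (if x - (S - {i}) = z - (S - {i}) then
      P$True$True * f (insert i (x \<inter> (S - {i}))) (insert i (z \<inter> (S - {i})))
    + P$False$True * f (insert i (x \<inter> (S - {i}))) (z \<inter> (S - {i}) - {i})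
    + P$True$False * f (x \<inter> (S - {i}) - {i}) (insert i (z \<inter> (S - {i})))
    + P$False$False * f (x \<inter> (S - {i}) - {i}) (z \<inter> (S - {i}) - {i}) else 0)"
      unfolding c Z_def by (simp add: f e)
  qed
  moreover have "emb1 i P ** X ** emb1 i P = emb1 i P ** Z"
    unfolding vec_eq_iff
  proof (intro allI)
    fix x z :: "'q set"
    define p where "p = (i \<in> x)"
    define q where "q = (i \<in> z)"
    define X1 where "X1 = X$(insert i x)$(insert i z)"
    define X2 where "X2 = X$(insert i x)$(z - {i})"
    define X3 where "X3 = X$(x - {i})$(insert i z)"
    define X4 where "X4 = X$(x - {i})$(z - {i})"
    have "(emb1 i P ** X ** emb1 i P) $ x $ z =
      X1 * (P$p$True * P$True$q) + X2 * (P$p$True * P$False$q) + X3 * (P$p$False * P$True$q) + X4 * (P$p$False * P$False$q)"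
      unfolding emb1_mr emb1_ml p_def q_def X1_def X2_def X3_def X4_def by (simp add: algebra_simps)
    also have "\<dots> = X1 * (P$True$True * P$p$q) + X2 * (P$False$True * P$p$q) + X3 * (P$True$False * P$p$q) + X4 * (P$False$False * P$p$q)"
      unfolding minor[of p True True q] minor[of p True False q] minor[of p False True q] minor[of p False False q] ..
    also have "\<dots> = P$p$q * (P$True$True * X1 + P$False$True * X2 + P$True$False * X3 + P$False$False * X4)"
      by (simp add: algebra_simps)
    also have "\<dots> = (emb1 i P ** Z) $ x $ z"
      unfolding emb1_ml Z_def p_def q_def X1_def X2_def X3_def X4_def
      by (cases "i \<in> z") (simp_all add: insert_absorb)
    finally show "(emb1 i P ** X ** emb1 i P) $ x $ z = (emb1 i P ** Z) $ x $ z" .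
  qed
  ultimately show ?thesis by blast
qed

type_synonym 'n cm = "complex^'n^'n"

lemma QQ_assoc: "Q ** Q = Q \<Longrightarrow> A ** Q ** Q = A ** Q" for A Q :: "'n::finite cm"
  by (metis matrix_mul_assoc)

lemma comm_assoc: "Z ** Q = Q ** Z \<Longrightarrow> A ** Z ** Q = A ** Q ** Z" for A Q Z :: "'n::finite cm"
  by (metis matrix_mul_assoc)

lemma part1_alg:
  fixes Q X Y Z1 Z2 W1 W2 :: "'n::finite cm"
  assumes QQ: "Q ** Q = Q"
    and c1: "Z1 ** Q = Q ** Z1" and c2: "Z2 ** Q = Q ** Z2"
    and c3: "W1 ** Q = Q ** W1" and c4: "W2 ** Q = Q ** W2"
    and zz: "Z1 ** Z2 = Z2 ** Z1" and ww: "W1 ** W2 = W2 ** W1"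
    and X: "X = Q ** Z1 + (mat 1 - Q) ** W1" and Y: "Y = Q ** Z2 + (mat 1 - Q) ** W2"
  shows "X ** Y = Y ** X"
proof -
  note r = mm_distribs matrix_mul_assoc c1 c2 c3 c4 comm_assoc[OF c1] comm_assoc[OF c2]
     comm_assoc[OF c3] comm_assoc[OF c4] QQ QQ_assoc[OF QQ]
  have "X ** Y = Q ** Z1 ** Z2 + W1 ** W2 - Q ** W1 ** W2"
    unfolding X Y by (simp add: r algebra_simps)
  moreover have "Y ** X = Q ** Z2 ** Z1 + W2 ** W1 - Q ** W2 ** W1"
    unfolding X Y by (simp add: r algebra_simps)
  ultimately show ?thesis using zz ww by (metis matrix_mul_assoc)
qed

lemma num_mult_l: "(numeral k :: 'n::finite cm) * A = (numeral k :: real) *\<^sub>R A"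
  by (simp add: vec_eq_iff scaleR_conv_of_real)
lemma num_mult_r: "A * (numeral k :: 'n::finite cm) = (numeral k :: real) *\<^sub>R A"
  by (simp add: vec_eq_iff scaleR_conv_of_real mult.commute)

lemmas msimps = mm_distribs matrix_mul_assoc algebra_simps num_mult_l num_mult_r

definition pnch :: "'n::finite cm \<Rightarrow> 'n cm \<Rightarrow> 'n cm" where
  "pnch Q X = Q ** X ** Q + (mat 1 - Q) ** X ** (mat 1 - Q)"

lemma pin_comm: "Q ** Q = Q \<Longrightarrow> Q ** pnch Q X = pnch Q X ** Q"
  by (simp add: pnch_def msimps QQ_assoc)

lemma pin_id: "Q ** Q = Q \<Longrightarrow> X ** Q = Q ** X \<Longrightarrow> pnch Q X = X"
  by (simp add: pnch_def msimps QQ_assoc comm_assoc)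

lemma pin_commutator: "C ** Q = Q ** C \<Longrightarrow> C ** pnch Q X - pnch Q X ** C = pnch Q (C ** X - X ** C)"
  by (simp add: pnch_def msimps comm_assoc)

lemma pin_comm_pres: "C ** Q = Q ** C \<Longrightarrow> C ** X = X ** C \<Longrightarrow> C ** pnch Q X = pnch Q X ** C"
proof -
  assume a: "C ** Q = Q ** C" "C ** X = X ** C"
  have z: "pnch Q 0 = 0" by (simp add: pnch_def)
  have "C ** pnch Q X - pnch Q X ** C = 0" using pin_commutator[OF a(1), of X] a(2) z by simp
  then show ?thesis by simp
qed

lemma pin_diff: "Q ** Q = Q \<Longrightarrow> X - pnch Q X = (Q - (mat 1 - Q)) ** (Q ** X - X ** Q)"
  by (simp add: pnch_def msimps QQ_assoc)

lemma pin_half: "Q ** Q = Q \<Longrightarrow> pnch Q X = (1/2) *\<^sub>R (X + (Q - (mat 1 - Q)) ** X ** (Q - (mat 1 - Q)))"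
  by (simp add: pnch_def msimps QQ_assoc)

lemma proj_compl:
  fixes Q :: "'n::finite cm"
  assumes "Q ** Q = Q"
  shows "Q ** (mat 1 - Q) = 0" "(mat 1 - Q) ** Q = 0" "(mat 1 - Q) ** (mat 1 - Q) = mat 1 - Q"
  using assms by (simp_all add: mm_sub_l mm_sub_r)

lemma U_sq: "Q ** Q = Q \<Longrightarrow> (Q - (mat 1 - Q)) ** (Q - (mat 1 - Q)) = mat 1" for Q :: "'n::finite cm"
proof -
  assume a: "Q ** Q = Q"
  show ?thesis using a by (simp add: mm_sub_l mm_sub_r num_mult_l num_mult_r mm_scale_l mm_scale_r)
qed

lemma R_commutator: "(a *\<^sub>R Q + b *\<^sub>R (mat 1 - Q)) ** X - X ** (a *\<^sub>R Q + b *\<^sub>R (mat 1 - Q))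
   = (a - b) *\<^sub>R (Q ** X - X ** Q)" for Q X :: "'n::finite cm"
  by (simp add: msimps)

lemma mv_bl: "bounded_linear (\<lambda>v. A *v v)" for A :: "'n::finite cm"
  using linear_conv_bounded_linear matrix_vector_mul_linear by blast

lemma opnorm_nonneg: "0 \<le> opnorm A" for A :: "'n::finite cm"
  unfolding opnorm_def by (rule onorm_pos_le[OF mv_bl])

lemma opnorm_add: "opnorm (A + B) \<le> opnorm A + opnorm B" for A B :: "'n::finite cm"
  unfolding opnorm_def matrix_vector_mult_add_rdistrib
  by (rule onorm_triangle[OF mv_bl mv_bl])

lemma opnorm_uminus: "opnorm (- A) = opnorm A" for A :: "'n::finite cm"
proof -
  have "(\<lambda>v. (- A) *v v) = (\<lambda>v. - (A *v v))"
    by (rule ext) (simp add: vec_eq_iff matrix_vector_mult_def sum_negf)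
  then show ?thesis unfolding opnorm_def using onorm_neg[of "\<lambda>v. A *v v"] by simp
qed

lemma opnorm_diff: "opnorm (A - B) \<le> opnorm A + opnorm B" for A B :: "'n::finite cm"
  using opnorm_add[of A "- B"] opnorm_uminus[of B] by simp

lemma opnorm_mult: "opnorm (A ** B) \<le> opnorm A * opnorm B" for A B :: "'n::finite cm"
proof -
  have "(\<lambda>v. (A ** B) *v v) = (\<lambda>v. A *v v) \<circ> (\<lambda>v. B *v v)"
    by (rule ext) (simp add: matrix_vector_mul_assoc)
  then show ?thesis unfolding opnorm_def using onorm_compose[OF mv_bl mv_bl] by simp
qed

lemma opnorm_scale: "opnorm (r *\<^sub>R A) = \<bar>r\<bar> * opnorm A" for A :: "'n::finite cm"
proof -
  have "(\<lambda>v. (r *\<^sub>R A) *v v) = (\<lambda>v. r *\<^sub>R (A *v v))"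
    by (rule ext) (unfold vec_eq_iff matrix_vector_mult_def vector_scaleR_component,
        simp add: scaleR_conv_of_real sum_distrib_left mult.assoc)
  then show ?thesis unfolding opnorm_def using onorm_scaleR[OF mv_bl] by simp
qed

lemma norm_sq_vec: "(norm v)^2 = Re (\<Sum>k\<in>UNIV. v$k * cnj (v$k))" for v :: "complex^'n::finite"
proof -
  have "(norm v)^2 = (\<Sum>k\<in>UNIV. (cmod (v$k))^2)"
    unfolding norm_vec_def L2_set_def by (simp add: sum_nonneg)
  also have "\<dots> = Re (\<Sum>k\<in>UNIV. v$k * cnj (v$k))"
    by (simp add: Re_sum complex_norm_square[symmetric] del: complex_norm_square)
  finally show ?thesis .
qed

lemma unitary_norm:
  fixes U :: "'n::finite cm"
  assumes h: "hermitian U" and uu: "U ** U = mat 1"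
  shows "norm (U *v v) = norm v"
proof -
  have hc: "cnj (U$k$l) = U$l$k" for k l
  proof -
    have "U$l$k = cnj (U$k$l)" using h unfolding hermitian_def by blast
    then show ?thesis by simp
  qed
  have uu': "(\<Sum>k\<in>UNIV. U$l$k * U$k$j) = (if l = j then 1 else 0)" for l j
  proof -
    have "(U ** U) $ l $ j = mat 1 $ l $ j" using uu by simp
    then show ?thesis by (simp add: matrix_matrix_mult_def mat_def)
  qed
  have "(\<Sum>k\<in>UNIV. (U *v v)$k * cnj ((U *v v)$k))
      = (\<Sum>k\<in>UNIV. \<Sum>j\<in>UNIV. \<Sum>l\<in>UNIV. v$j * cnj (v$l) * (U$l$k * U$k$j))"
    unfolding matrix_vector_mult_def vec_lambda_beta cnj_sum complex_cnj_mult hc sum_product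
    by (simp add: mult_ac)
  also have "\<dots> = (\<Sum>j\<in>UNIV. \<Sum>k\<in>UNIV. \<Sum>l\<in>UNIV. v$j * cnj (v$l) * (U$l$k * U$k$j))"
    by (rule sum.swap)
  also have "\<dots> = (\<Sum>j\<in>UNIV. \<Sum>l\<in>UNIV. \<Sum>k\<in>UNIV. v$j * cnj (v$l) * (U$l$k * U$k$j))"
    by (rule sum.cong[OF refl], rule sum.swap)
  also have "\<dots> = (\<Sum>j\<in>UNIV. \<Sum>l\<in>UNIV. v$j * cnj (v$l) * (if l = j then 1 else 0))"
    by (rule sum.cong[OF refl], rule sum.cong[OF refl], subst sum_distrib_left[symmetric], simp only: uu')
  also have "\<dots> = (\<Sum>j\<in>UNIV. v$j * cnj (v$j))"
    by (simp add: if_distrib cong: if_cong)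
  finally have "(norm (U *v v))^2 = (norm v)^2" unfolding norm_sq_vec by simp
  then show ?thesis by (simp add: power2_eq_iff_nonneg)
qed

lemma opnorm_unitary:
  fixes U :: "'n::finite cm"
  assumes "hermitian U" "U ** U = mat 1"
  shows "opnorm U \<le> 1"
  unfolding opnorm_def by (rule onorm_le) (simp add: unitary_norm[OF assms])

lemma herm_diff: "hermitian A \<Longrightarrow> hermitian B \<Longrightarrow> hermitian (A - B)"
  for A B :: "complex^'n^'n"
  unfolding hermitian_def
proof (intro allI)
  fix i j
  assume a: "\<forall>i j. A $ i $ j = cnj (A $ j $ i)" and b: "\<forall>i j. B $ i $ j = cnj (B $ j $ i)"
  have "A $ i $ j = cnj (A $ j $ i)" "B $ i $ j = cnj (B $ j $ i)" using a b by blast+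
  then show "(A - B) $ i $ j = cnj ((A - B) $ j $ i)" by simp
qed

lemma herm_one: "hermitian (mat 1 :: complex^'n^'n)"
  unfolding hermitian_def by (simp add: mat_def)

lemma pinned_facts:
  fixes R :: qop1
  assumes h: "hermitian R" and g: "spectral_gap R \<ge> e" and e: "e > 0"
  shows "spec_proj R ** spec_proj R = spec_proj R"
    "spec_proj R $ False $ False + spec_proj R $ True $ True = 1"
    "hermitian (spec_proj R)"
    "lm2 R < lp2 R"
    "spectral_gap R = lp2 R - lm2 R"
    "R = lm2 R *\<^sub>R spec_proj R + lp2 R *\<^sub>R (mat 1 - spec_proj R)"
proof -
  show sg: "spectral_gap R = lp2 R - lm2 R"
    unfolding spectral_gap_def lambda_herm2[OF h] ..
  show lt: "lm2 R < lp2 R" using g e sg by simp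
  note sp = spec_proj_Pi0[OF h lt]
  show "spec_proj R ** spec_proj R = spec_proj R"
    "spec_proj R $ False $ False + spec_proj R $ True $ True = 1"
    "hermitian (spec_proj R)"
    "R = lm2 R *\<^sub>R spec_proj R + lp2 R *\<^sub>R (mat 1 - spec_proj R)"
    unfolding sp using Pi0_props[OF h lt] by blast+
qed

lemma pinch_pin: "pinch_at i A X = pnch (emb1 i (spec_proj A)) X"
  by (simp add: pinch_at_def pnch_def Let_def)

lemma Q_facts:
  fixes R :: qop1 and i :: "'q::finite"
  assumes h: "hermitian R" and g: "spectral_gap R \<ge> e" and e: "e > 0"
  defines "Q \<equiv> emb1 i (spec_proj R)"
  shows "Q ** Q = Q"
    "emb1 i R = lm2 R *\<^sub>R Q + lp2 R *\<^sub>R (mat 1 - Q)"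
    "hermitian (Q - (mat 1 - Q))"
    "mat 1 - Q = emb1 i (mat 1 - spec_proj R)"
proof -
  note pf = pinned_facts[OF h g e]
  show "Q ** Q = Q" unfolding Q_def emb1_mult pf(1) ..
  show "mat 1 - Q = emb1 i (mat 1 - spec_proj R)" unfolding Q_def emb1_sub emb1_one ..
  show "emb1 i R = lm2 R *\<^sub>R Q + lp2 R *\<^sub>R (mat 1 - Q)"
    apply (subst pf(6))
    unfolding Q_def emb1_add emb1_scale emb1_sub emb1_one ..
  show "hermitian (Q - (mat 1 - Q))"
    unfolding Q_def emb1_one[symmetric, of i] emb1_sub[symmetric]
    by (rule emb1_herm, rule herm_diff[OF pf(3) herm_diff[OF herm_one pf(3)]])
qed

lemma pin_err:
  fixes Q X :: "'n::finite cm"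
  assumes QQ: "Q ** Q = Q" and hU: "hermitian (Q - (mat 1 - Q))" and ab: "a < b"
  shows "opnorm (X - pnch Q X) \<le> opnorm ((a *\<^sub>R Q + b *\<^sub>R (mat 1 - Q)) ** X - X ** (a *\<^sub>R Q + b *\<^sub>R (mat 1 - Q))) / (b - a)"
proof -
  define U where "U = Q - (mat 1 - Q)"
  define K where "K = Q ** X - X ** Q"
  have U1: "opnorm U \<le> 1" unfolding U_def by (rule opnorm_unitary[OF hU U_sq[OF QQ]])
  have "opnorm (X - pnch Q X) = opnorm (U ** K)" unfolding U_def K_def pin_diff[OF QQ] ..
  also have "\<dots> \<le> opnorm U * opnorm K" by (rule opnorm_mult)
  also have "\<dots> \<le> opnorm K" by (rule mult_left_le_one_le[OF opnorm_nonneg opnorm_nonneg U1])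
  also have "opnorm K = opnorm ((a - b) *\<^sub>R K) / (b - a)"
    unfolding opnorm_scale using ab by simp
  also have "(a - b) *\<^sub>R K = (a *\<^sub>R Q + b *\<^sub>R (mat 1 - Q)) ** X - X ** (a *\<^sub>R Q + b *\<^sub>R (mat 1 - Q))"
    unfolding K_def R_commutator ..
  finally show ?thesis by simp
qed

lemma pin_contr:
  fixes Q X :: "'n::finite cm"
  assumes QQ: "Q ** Q = Q" and hU: "hermitian (Q - (mat 1 - Q))"
  shows "opnorm (pnch Q X) \<le> opnorm X"
proof -
  define U where "U = Q - (mat 1 - Q)"
  have U1: "opnorm U \<le> 1" unfolding U_def by (rule opnorm_unitary[OF hU U_sq[OF QQ]])
  have "opnorm (U ** X ** U) \<le> opnorm (U ** X) * opnorm U" by (rule opnorm_mult)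
  also have "\<dots> \<le> opnorm U * opnorm X * opnorm U"
    by (rule mult_right_mono[OF opnorm_mult opnorm_nonneg])
  also have "\<dots> \<le> opnorm X"
  proof -
    have a: "opnorm U * opnorm X \<le> opnorm X" by (rule mult_left_le_one_le[OF opnorm_nonneg opnorm_nonneg U1])
    have "opnorm U * opnorm X * opnorm U \<le> opnorm X * opnorm U"
      by (rule mult_right_mono[OF a opnorm_nonneg])
    also have "\<dots> \<le> opnorm X" by (rule mult_right_le_one_le[OF opnorm_nonneg opnorm_nonneg U1])
    finally show ?thesis .
  qed
  finally have 1: "opnorm (U ** X ** U) \<le> opnorm X" .
  have "opnorm (pnch Q X) = opnorm (X + U ** X ** U) / 2"
    unfolding pin_half[OF QQ] U_def opnorm_scale by simp
  also have "\<dots> \<le> (opnorm X + opnorm (U ** X ** U)) / 2"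
    using opnorm_add[of X "U ** X ** U"] by simp
  also have "\<dots> \<le> opnorm X" using 1 by simp
  finally show ?thesis .
qed

lemma suppd_pinch:
  assumes "suppd S X" "i \<in> S"
  shows "suppd S (pinch_at i A X)"
proof -
  have e: "mat 1 - emb1 i (spec_proj A) = emb1 i (mat 1 - spec_proj A)"
    unfolding emb1_sub emb1_one ..
  show ?thesis unfolding pinch_at_def Let_def e
    by (intro suppd_add suppd_mr suppd_ml assms)
qed

lemma opnorm_zero: "opnorm (0 :: 'n::finite cm) = 0"
proof -
  have "(\<lambda>v. (0 :: 'n cm) *v v) = (\<lambda>v. 0)" by (rule ext) simp
  then show ?thesis unfolding opnorm_def using onorm_zero by metis
qed

lemma opnorm_swap: "opnorm (A - B) = opnorm (B - A)" for A B :: "'n::finite cm"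
  using opnorm_uminus[of "B - A"] by simp

lemma emb1_comm: "i \<noteq> j \<Longrightarrow> emb1 i A ** emb1 j B = emb1 j B ** emb1 i A"
  for A B :: qop1 and i j :: "'q::finite"
  by (rule suppd_comm[OF suppd_emb1]) simp

lemma decomp:
  fixes X :: "'q::finite qopn" and P :: qop1
  assumes P1: "P ** P = P" and P2: "P $ False $ False + P $ True $ True = 1"
    and sX: "suppd {i, j} X" and ij: "j \<noteq> i"
    and cX: "X ** emb1 i P = emb1 i P ** X"
  shows "\<exists>Z W. suppd {j} Z \<and> suppd {j} W \<and> X = emb1 i P ** Z + (mat 1 - emb1 i P) ** W"
proof -
  have QQ: "emb1 i P ** emb1 i P = emb1 i P" unfolding emb1_mult P1 ..
  have Qc: "mat 1 - emb1 i P = emb1 i (mat 1 - P)" unfolding emb1_sub emb1_one ..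
  have S: "{i, j} - {i} = {j}" using ij by auto
  note cp = compl_proj[OF P1 P2]
  obtain Z where Z: "suppd {j} Z" "emb1 i P ** X ** emb1 i P = emb1 i P ** Z"
    using rank1_sandwich[OF rank1_minor[OF P1 P2] sX, of i] S by auto
  obtain W where W: "suppd {j} W" "emb1 i (mat 1 - P) ** X ** emb1 i (mat 1 - P) = emb1 i (mat 1 - P) ** W"
    using rank1_sandwich[OF rank1_minor[OF cp(1) cp(2)] sX, of i] S by auto
  have "X = pnch (emb1 i P) X" using pin_id[OF QQ cX] by simp
  also have "\<dots> = emb1 i P ** Z + (mat 1 - emb1 i P) ** W"
    unfolding pnch_def Qc Z(2) W(2) ..
  finally show ?thesis using Z(1) W(1) by blast
qed

lemma frac_mono_aux: "0 \<le> k \<Longrightarrow> 0 < e \<Longrightarrow> e \<le> g \<Longrightarrow> x \<le> k \<Longrightarrow> x / g \<le> k / e"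
  for x k e g :: real
  by (rule frac_le) auto

theorem lemma5p2:
  fixes E :: "('q::finite \<times> 'q) set"
    and h :: "'q \<times> 'q \<Rightarrow> 'q qopn"
    and \<eta> \<kappa> :: "'q \<Rightarrow> real"
    and pin :: "'q \<Rightarrow> bool"
    and R :: "'q \<Rightarrow> qop1"
  assumes edge_distinct: "\<And>i j. (i, j) \<in> E \<Longrightarrow> i \<noteq> j"
    and edge_unique: "\<And>i j. (i, j) \<in> E \<Longrightarrow> (j, i) \<notin> E"
    and h_herm: "\<And>e. e \<in> E \<Longrightarrow> hermitian (h e)"
    and h_local: "\<And>i j. (i, j) \<in> E \<Longrightarrow> \<exists>g. h (i, j) = emb2 i j g"
    and eta_pos: "\<And>i. \<eta> i > 0"
    and kappa_nonneg: "\<And>i. \<kappa> i \<ge> 0"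
    and R_herm: "\<And>i. pin i \<Longrightarrow> hermitian (R i)"
    and R_gap: "\<And>i. pin i \<Longrightarrow> spectral_gap (R i) \<ge> \<eta> i"
    and R_comm: "\<And>i j. pin i \<Longrightarrow> (i, j) \<in> E \<Longrightarrow>
                   opnorm (commutator (emb1 i (R i)) (h (i, j))) \<le> \<kappa> i"
    and R_comm': "\<And>i j. pin i \<Longrightarrow> (j, i) \<in> E \<Longrightarrow>
                   opnorm (commutator (emb1 i (R i)) (h (j, i))) \<le> \<kappa> i"
  defines "h' \<equiv> (\<lambda>(i, j). superop_at pin R i (superop_at pin R j (h (i, j))))"
  shows "(\<forall>i. pin i \<longrightarrow>
            (\<forall>e1\<in>E. \<forall>e2\<in>E. i \<in> {fst e1, snd e1} \<longrightarrow> i \<in> {fst e2, snd e2} \<longrightarrow>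
                commutator (h' e1) (h' e2) = 0) \<and>
            (\<forall>e\<in>E. i \<in> {fst e, snd e} \<longrightarrow> commutator (emb1 i (R i)) (h' e) = 0))
       \<and> (\<forall>(i, j)\<in>E. opnorm (h' (i, j) - h (i, j)) \<le> 4 * (\<kappa> i / \<eta> i + \<kappa> j / \<eta> j))"
proof -
  define Q where "Q i = emb1 i (spec_proj (R i))" for i
  have sop: "superop_at pin R i X = (if pin i then pnch (Q i) X else X)" for i X
    unfolding superop_at_def pinch_pin Q_def ..
  have QQ: "Q i ** Q i = Q i" if "pin i" for i
    unfolding Q_def by (rule Q_facts(1)[OF R_herm[OF that] R_gap[OF that] eta_pos])
  have Rq: "emb1 i (R i) = lm2 (R i) *\<^sub>R Q i + lp2 (R i) *\<^sub>R (mat 1 - Q i)" if "pin i" for i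
    unfolding Q_def by (rule Q_facts(2)[OF R_herm[OF that] R_gap[OF that] eta_pos])
  have hU: "hermitian (Q i - (mat 1 - Q i))" if "pin i" for i
    unfolding Q_def by (rule Q_facts(3)[OF R_herm[OF that] R_gap[OF that] eta_pos])
  have lt: "lm2 (R i) < lp2 (R i)" if "pin i" for i
    by (rule pinned_facts(4)[OF R_herm[OF that] R_gap[OF that] eta_pos])
  have gap: "\<eta> i \<le> lp2 (R i) - lm2 (R i)" if "pin i" for i
    using R_gap[OF that] pinned_facts(5)[OF R_herm[OF that] R_gap[OF that] eta_pos] by simp
  have Qcomm: "emb1 i A ** Q j = Q j ** emb1 i A" if "i \<noteq> j" for i j A
    unfolding Q_def by (rule emb1_comm[OF that])
  have h'_def2: "h' (a, b) = superop_at pin R a (superop_at pin R b (h (a, b)))" for a b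
    unfolding h'_def by simp
  have supp: "suppd {a, b} (h' (a, b))" if abE: "(a, b) \<in> E" for a b
  proof -
    obtain g where g: "h (a, b) = emb2 a b g" using h_local[OF abE] by blast
    have s0: "suppd {a, b} (h (a, b))" unfolding g by (rule suppd_emb2)
    have s1: "suppd {a, b} (superop_at pin R b (h (a, b)))"
      unfolding superop_at_def using suppd_pinch[OF s0, of b] s0 by simp
    show ?thesis
      unfolding h'_def2 superop_at_def[of pin R a] using suppd_pinch[OF s1, of a] s1 by simp
  qed
  have commQ: "h' e ** Q i = Q i ** h' e" if "pin i" "e \<in> E" "i \<in> {fst e, snd e}" for i e
  proof -
    obtain a b where e: "e = (a, b)" by (cases e)
    have ab: "a \<noteq> b" using edge_distinct that(2) e by blast
    show ?thesis
    proof (cases "a = i")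
      case True
      show ?thesis unfolding e h'_def2 sop True using pin_comm[OF QQ[OF that(1)]] that(1) by simp
    next
      case False
      then have bi: "b = i" using that(3) e by auto
      define Z where "Z = pnch (Q i) (h (a, b))"
      have cZ: "Q i ** Z = Z ** Q i" unfolding Z_def by (rule pin_comm[OF QQ[OF that(1)]])
      show ?thesis
      proof (cases "pin a")
        case True
        have "Q i ** pnch (Q a) Z = pnch (Q a) Z ** Q i"
          by (rule pin_comm_pres[OF _ cZ]) (unfold Q_def, rule emb1_comm, use False in auto)
        then show ?thesis unfolding e h'_def2 sop bi using that(1) True by (simp add: Z_def bi)
      next
        case False
        then show ?thesis unfolding e h'_def2 sop bi using that(1) cZ by (simp add: Z_def bi)
      qed
    qed
  qed
  have other: "\<exists>j. j \<noteq> i \<and> (e = (i, j) \<or> e = (j, i))" if "e \<in> E" "i \<in> {fst e, snd e}" for e i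
  proof -
    obtain a b where e: "e = (a, b)" by (cases e)
    have "a \<noteq> b" using edge_distinct that(1) e by blast
    then show ?thesis using that(2) e by auto
  qed
  have part1a: "commutator (h' e1) (h' e2) = 0"
    if pi: "pin i" and e1: "e1 \<in> E" and e2: "e2 \<in> E" and i1: "i \<in> {fst e1, snd e1}" and i2: "i \<in> {fst e2, snd e2}"
    for i e1 e2
  proof (cases "e1 = e2")
    case True
    then show ?thesis by (simp add: commutator_def)
  next
    case ne: False
    obtain j where j: "j \<noteq> i" "e1 = (i, j) \<or> e1 = (j, i)" using other[OF e1 i1] by blast
    obtain k where k: "k \<noteq> i" "e2 = (i, k) \<or> e2 = (k, i)" using other[OF e2 i2] by blast
    have jk: "j \<noteq> k"
    proof
      assume "j = k"
      then show False using j k ne e1 e2 edge_unique by auto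
    qed
    have s1: "suppd {i, j} (h' e1)"
      using j(2) supp[of i j] supp[of j i] e1 by (auto simp: insert_commute)
    have s2: "suppd {i, k} (h' e2)"
      using k(2) supp[of i k] supp[of k i] e2 by (auto simp: insert_commute)
    note pf = pinned_facts[OF R_herm[OF pi] R_gap[OF pi] eta_pos]
    obtain Z1 W1 where D1: "suppd {j} Z1" "suppd {j} W1" "h' e1 = Q i ** Z1 + (mat 1 - Q i) ** W1"
      using decomp[OF pf(1) pf(2) s1 j(1)] commQ[OF pi e1 i1] unfolding Q_def by blast
    obtain Z2 W2 where D2: "suppd {k} Z2" "suppd {k} W2" "h' e2 = Q i ** Z2 + (mat 1 - Q i) ** W2"
      using decomp[OF pf(1) pf(2) s2 k(1)] commQ[OF pi e2 i2] unfolding Q_def by blast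
    have cQ: "Z ** Q i = Q i ** Z" if "suppd {l} Z" "l \<noteq> i" for Z l
      unfolding Q_def using suppd_comm[OF that(1), of i] that(2) by auto
    have cZ: "Z ** Z' = Z' ** Z" if "suppd {j} Z" "suppd {k} Z'" for Z Z'
    proof -
      define B where "B = (\<chi> p q. Z' $ (if p then {k} else {}) $ (if q then {k} else {}))"
      have e: "Z' = emb1 k B" unfolding B_def by (rule suppd_single[OF that(2)])
      have "emb1 k B ** Z = Z ** emb1 k B" using suppd_comm[OF that(1), of k] jk by auto
      then show ?thesis unfolding e by simp
    qed
    have "h' e1 ** h' e2 = h' e2 ** h' e1"
      by (rule part1_alg[OF QQ[OF pi] cQ[OF D1(1) j(1)] cQ[OF D2(1) k(1)] cQ[OF D1(2) j(1)] cQ[OF D2(2) k(1)]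
          cZ[OF D1(1) D2(1)] cZ[OF D1(2) D2(2)] D1(3) D2(3)])
    then show ?thesis by (simp add: commutator_def)
  qed
  have part1b: "commutator (emb1 i (R i)) (h' e) = 0"
    if pi: "pin i" and e: "e \<in> E" and ie: "i \<in> {fst e, snd e}" for i e
    unfolding commutator_def Rq[OF pi] R_commutator using commQ[OF pi e ie] by simp
  have part2: "opnorm (h' (a, b) - h (a, b)) \<le> 4 * (\<kappa> a / \<eta> a + \<kappa> b / \<eta> b)"
    if ab: "(a, b) \<in> E" for a b
  proof -
    define H where "H = h (a, b)"
    define Y where "Y = superop_at pin R b H"
    have anb: "a \<noteq> b" using edge_distinct[OF ab] .
    have ka: "0 \<le> \<kappa> a / \<eta> a" and kb: "0 \<le> \<kappa> b / \<eta> b"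
      using kappa_nonneg eta_pos by (simp_all add: less_imp_le)
    have err: "opnorm (X - pnch (Q l) X) \<le> opnorm (commutator (emb1 l (R l)) X) / (lp2 (R l) - lm2 (R l))"
      if "pin l" for l X
      unfolding commutator_def Rq[OF that] by (rule pin_err[OF QQ[OF that] hU[OF that] lt[OF that]])
    have d1: "opnorm (Y - H) \<le> \<kappa> b / \<eta> b"
    proof (cases "pin b")
      case True
      have "opnorm (Y - H) = opnorm (H - pnch (Q b) H)"
        unfolding Y_def sop using True opnorm_swap by simp
      also have "\<dots> \<le> opnorm (commutator (emb1 b (R b)) H) / (lp2 (R b) - lm2 (R b))"
        by (rule err[OF True])
      also have "\<dots> \<le> \<kappa> b / \<eta> b"
        by (rule frac_mono_aux[OF kappa_nonneg eta_pos gap[OF True]])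
           (unfold H_def, rule R_comm'[OF True ab])
      finally show ?thesis .
    next
      case False
      then show ?thesis using kb by (simp add: Y_def sop opnorm_zero)
    qed
    have cY: "opnorm (commutator (emb1 a (R a)) Y) \<le> \<kappa> a" if pa: "pin a"
    proof (cases "pin b")
      case True
      have "commutator (emb1 a (R a)) Y = pnch (Q b) (commutator (emb1 a (R a)) H)"
        unfolding Y_def sop commutator_def using True pin_commutator[OF Qcomm[OF anb]] by simp
      then have "opnorm (commutator (emb1 a (R a)) Y) \<le> opnorm (commutator (emb1 a (R a)) H)"
        using pin_contr[OF QQ[OF True] hU[OF True]] by simp
      also have "\<dots> \<le> \<kappa> a" unfolding H_def by (rule R_comm[OF pa ab])
      finally show ?thesis .
    next
      case False
      then show ?thesis unfolding Y_def sop H_def using R_comm[OF pa ab] by simp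
    qed
    have d2: "opnorm (superop_at pin R a Y - Y) \<le> \<kappa> a / \<eta> a"
    proof (cases "pin a")
      case True
      have "opnorm (superop_at pin R a Y - Y) = opnorm (Y - pnch (Q a) Y)"
        unfolding sop using True opnorm_swap by simp
      also have "\<dots> \<le> opnorm (commutator (emb1 a (R a)) Y) / (lp2 (R a) - lm2 (R a))"
        by (rule err[OF True])
      also have "\<dots> \<le> \<kappa> a / \<eta> a"
        by (rule frac_mono_aux[OF kappa_nonneg eta_pos gap[OF True] cY[OF True]])
      finally show ?thesis .
    next
      case False
      then show ?thesis using ka by (simp add: sop opnorm_zero)
    qed
    have "h' (a, b) - h (a, b) = (superop_at pin R a Y - Y) + (Y - H)"
      unfolding h'_def2 Y_def H_def by simp
    then have "opnorm (h' (a, b) - h (a, b)) \<le> opnorm (superop_at pin R a Y - Y) + opnorm (Y - H)"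
      using opnorm_add by metis
    also have "\<dots> \<le> \<kappa> a / \<eta> a + \<kappa> b / \<eta> b" using d1 d2 by simp
    also have "\<dots> \<le> 4 * (\<kappa> a / \<eta> a + \<kappa> b / \<eta> b)" using ka kb by simp
    finally show ?thesis .
  qed
  show ?thesis
    using part1a part1b part2 by blast
qed

end
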